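(* Let $\mathcal G=(\mathcal V,\mathcal E)$ be a digraph (network) and $u\in\mathcal V$ an agent executing Phase 1 of the protocol described in the context (not counting steps that call other phases). Then the time-complexity of Phase 1 for agent $u$ is $\mathcal O(\max\{|\mathcal N^-(u)||\mathcal E|,\ |\mathcal V|+|\mathcal E|\})$, where $\mathcal N^-(u)=\{v:(v,u)\in\mathcal E\}$.
   Context: Agents are the nodes of a digraph $(\mathcal V,\mathcal E)$, with unique integer IDs, each knowing its in- and out-neighbors, communicating synchronously along edges ($v$ receives from $u$ if $(u,v)\in\mathcal E$). Phase 1 for agent $u$: $u$ initially knows the set of its outgoing edges $\{(u,v):(u,v)\in\mathcal E\}$; repeatedly, it sends the edges newly learned in the previous step to all its out-neighbors and adds to its known set all edges received from its in-neighbors, until no new edges are learned. Then $u$ computes, with Tarjan's algorithm, the strongly connected components (SCCs) of the digraph formed by its known edges, and classifies its own SCC $\mathcal S$ as a source (no known edge from outside $\mathcal S$ into $\mathcal S$), a target (no known edge from $\mathcal S$ to outside), mixed (both kinds exist) or isolated (neither exists), and then decides which phase to go to next. *)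

theory Defs
  imports Main
begin

type_synonym edge = "int \<times> int"

definition in_nbrs :: "edge set \<Rightarrow> int \<Rightarrow> int set" where
  "in_nbrs E u = {v. (v, u) \<in> E}"

text \<open>Synchronous execution of the flooding part of Phase 1, for all agents in
  lockstep.  flood E t v = (K, N): K is the set of edges known by agent v after
  step t, N the set of edges newly learned at step t (sent at step t+1).\<close>
primrec flood :: "edge set \<Rightarrow> nat \<Rightarrow> int \<Rightarrow> edge set \<times> edge set" where
  "flood E 0 = (\<lambda>v. ({e \<in> E. fst e = v}, {e \<in> E. fst e = v}))"
| "flood E (Suc t) =
     (let s = flood E t in
      (\<lambda>v. let K' = fst (s v) \<union> (\<Union>w \<in> in_nbrs E v. snd (s w))
           in (K', K' - fst (s v))))"

definition known :: "edge set \<Rightarrow> int \<Rightarrow> nat \<Rightarrow> edge set" where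
  "known E v t = fst (flood E t v)"

definition new_edges :: "edge set \<Rightarrow> int \<Rightarrow> nat \<Rightarrow> edge set" where
  "new_edges E v t = snd (flood E t v)"

definition stop_step :: "edge set \<Rightarrow> int \<Rightarrow> nat" where
  "stop_step E u = (LEAST t. 0 < t \<and> new_edges E u t = {})"

text \<open>Cost model (number of elementary operations of agent u in Phase 1):
  one unit of overhead per step; one unit per edge sent (agent u broadcasts its
  newly learned edges of step t at step t+1) and per edge received from each
  in-neighbour; Tarjan's algorithm on the known digraph with its standard cost
  (#vertices + #edges, vertices being u and the endpoints of known edges);
  classification of u's SCC by one scan over the known edges.\<close>
definition phase1_cost :: "edge set \<Rightarrow> int \<Rightarrow> nat" where
  "phase1_cost E u =
     (let T = stop_step E u; K = known E u T in
        T
      + (\<Sum>t<T. card (new_edges E u t) + (\<Sum>w \<in> in_nbrs E u. card (new_edges E w t)))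
      + (card (insert u (Field K)) + card K)
      + card K)"

end

theory Submission
  imports Defs
begin

lemma known_0: "known E v 0 = {e \<in> E. fst e = v}"
  by (simp add: known_def)
lemma new_0: "new_edges E v 0 = {e \<in> E. fst e = v}"
  by (simp add: new_edges_def)
lemma known_Suc: "known E v (Suc t) = known E v t \<union> (\<Union>w \<in> in_nbrs E v. new_edges E w t)"
  by (simp add: known_def new_edges_def Let_def)
lemma new_Suc: "new_edges E v (Suc t) = known E v (Suc t) - known E v t"
  by (simp add: known_def new_edges_def Let_def)

lemma sub_E: "known E v t \<subseteq> E \<and> new_edges E v t \<subseteq> known E v t"
proof (induction t arbitrary: v)
  case 0 then show ?case by (auto simp: known_0 new_0)
next
  case (Suc t)
  have "known E v (Suc t) \<subseteq> E" using Suc by (auto simp: known_Suc)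
  then show ?case by (auto simp: new_Suc)
qed

lemma mono_K: "known E v t \<subseteq> known E v (Suc t)"
  by (auto simp: known_Suc)

lemma sum_new:
  assumes "finite E"
  shows "(\<Sum>t<Suc n. card (new_edges E v t)) = card (known E v n)"
proof (induction n)
  case 0 then show ?case by (simp add: known_0 new_0)
next
  case (Suc n)
  have f: "finite (known E v (Suc n))" using finite_subset[OF conjunct1[OF sub_E] assms] .
  have "card (new_edges E v (Suc n)) = card (known E v (Suc n)) - card (known E v n)"
    unfolding new_Suc using card_Diff_subset[OF finite_subset[OF mono_K f] mono_K] .
  moreover have "card (known E v n) \<le> card (known E v (Suc n))"
    using card_mono[OF f mono_K] .
  ultimately show ?case using Suc by simp
qed

lemma sum_new_le:
  assumes "finite E"
  shows "(\<Sum>t<n. card (new_edges E v t)) \<le> card E"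
proof (cases n)
  case 0 then show ?thesis by simp
next
  case (Suc m)
  then show ?thesis using sum_new[OF assms, where n=m and v=v] card_mono[OF assms conjunct1[OF sub_E[of E v m]]] by simp
qed

lemma grow:
  assumes "finite E"
  shows "(\<forall>s. 0 < s \<and> s \<le> t \<longrightarrow> new_edges E v s \<noteq> {}) \<longrightarrow> t \<le> card (known E v t)"
proof (induction t)
  case 0 then show ?case by simp
next
  case (Suc t)
  show ?case
  proof
    assume h: "\<forall>s. 0 < s \<and> s \<le> Suc t \<longrightarrow> new_edges E v s \<noteq> {}"
    then have "t \<le> card (known E v t)" using Suc by auto
    moreover have "new_edges E v (Suc t) \<noteq> {}" using h by simp
    then have "known E v t \<subset> known E v (Suc t)"
      using mono_K[of E v t] unfolding new_Suc by blast
    moreover have "finite (known E v (Suc t))" using finite_subset[OF conjunct1[OF sub_E] assms] .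
    ultimately have "card (known E v t) < card (known E v (Suc t))"
      using psubset_card_mono by blast
    then show "Suc t \<le> card (known E v (Suc t))" using \<open>t \<le> card (known E v t)\<close> by simp
  qed
qed

lemma stop_le:
  assumes "finite E"
  shows "stop_step E u \<le> card E + 1"
proof -
  have "\<exists>s. 0 < s \<and> s \<le> card E + 1 \<and> new_edges E u s = {}"
  proof (rule ccontr)
    assume "\<not> ?thesis"
    then have "\<forall>s. 0 < s \<and> s \<le> card E + 1 \<longrightarrow> new_edges E u s \<noteq> {}" by blast
    then have "card E + 1 \<le> card (known E u (card E + 1))" using grow[OF assms] by blast
    moreover have "card (known E u (card E + 1)) \<le> card E"
      using card_mono[OF assms conjunct1[OF sub_E]] .
    ultimately show False by simp
  qed
  then obtain s where s: "0 < s" "s \<le> card E + 1" "new_edges E u s = {}" by blast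
  have "stop_step E u \<le> s" unfolding stop_step_def by (rule Least_le) (use s in auto)
  then show ?thesis using s by simp
qed

theorem proposition3:
  shows "\<exists>C::nat. \<forall>(V::int set) (E::edge set) u.
           finite V \<longrightarrow> E \<subseteq> V \<times> V \<longrightarrow> u \<in> V \<longrightarrow>
           phase1_cost E u \<le> C * max (card (in_nbrs E u) * card E) (card V + card E)"
proof (intro exI allI impI)
  fix V :: "int set" and E :: "edge set" and u
  assume V: "finite V" and EV: "E \<subseteq> V \<times> V" and u: "u \<in> V"
  have fE: "finite E" using V EV finite_subset by blast
  define T where "T = stop_step E u"
  define K where "K = known E u T"
  define M where "M = max (card (in_nbrs E u) * card E) (card V + card E)"
  have fN: "finite (in_nbrs E u)"
  proof -
    have "in_nbrs E u \<subseteq> fst ` E" by (force simp: in_nbrs_def)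
    then show ?thesis using fE finite_subset by blast
  qed
  have T: "T \<le> card E + 1" using stop_le[OF fE] T_def by simp
  have V1: "1 \<le> card V" using u V card_0_eq by fastforce
  have a: "(\<Sum>t<T. card (new_edges E u t)) \<le> card E" using sum_new_le[OF fE] .
  have "(\<Sum>t<T. \<Sum>w \<in> in_nbrs E u. card (new_edges E w t))
        = (\<Sum>w \<in> in_nbrs E u. \<Sum>t<T. card (new_edges E w t))" by (rule sum.swap)
  also have "\<dots> \<le> (\<Sum>w \<in> in_nbrs E u. card E)"
    by (rule sum_mono) (rule sum_new_le[OF fE])
  also have "\<dots> = card (in_nbrs E u) * card E" by simp
  finally have b: "(\<Sum>t<T. \<Sum>w \<in> in_nbrs E u. card (new_edges E w t)) \<le> card (in_nbrs E u) * card E" .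
  have KE: "K \<subseteq> E" using sub_E K_def by blast
  have cK: "card K \<le> card E" using KE fE card_mono by blast
  have "Field K \<subseteq> V" using KE EV unfolding Field_def by force
  then have "insert u (Field K) \<subseteq> V" using u by blast
  then have cF: "card (insert u (Field K)) \<le> card V" using V card_mono by blast
  have eq: "phase1_cost E u = T + ((\<Sum>t<T. card (new_edges E u t)) + (\<Sum>t<T. \<Sum>w \<in> in_nbrs E u. card (new_edges E w t)))
      + (card (insert u (Field K)) + card K) + card K"
    unfolding phase1_cost_def T_def[symmetric] K_def[symmetric] Let_def sum.distrib by simp
  have "card (in_nbrs E u) * card E \<le> M" "card V + card E \<le> M" unfolding M_def by auto
  then have "phase1_cost E u \<le> 6 * M" unfolding eq using T V1 a b cK cF by linarith
  then show "phase1_cost E u \<le> 6 * max (card (in_nbrs E u) * card E) (card V + card E)"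
    unfolding M_def .
qed

end
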